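(* Assume $\|\hat F'(y)-\hat F'(x)\|_F\le L_{\hat F}\|y-x\|$ for all $x,y\in\mathcal F$ and $\sigma_{\min}(\hat F'(x)^* )\ge\sqrt\mu$ for all $x\in\mathcal F$, some $\mu>0$. Then for the sequence $\{x_k\}$ generated by Scheme 2: $$\hat f_1(x_{k+1})\le\varepsilon_k+\begin{cases}\frac{L_{\hat F}}{\mu}\hat f_2(x_k)\le\frac12\hat f_1(x_k),&\text{if }\hat f_1(x_k)\le\frac{\mu}{2L_{\hat F}},\\ \hat f_1(x_k)-\frac{\mu}{4L_{\hat F}},&\text{otherwise}.\end{cases}$$ If $L_k=L_{\hat F}$ is fixed while generating the sequence, then $$\hat f_1(x_{k+1})\le\varepsilon_k+\begin{cases}\frac{L_{\hat F}}{2\mu}\hat f_2(x_k)\le\frac12\hat f_1(x_k),&\text{if }\hat f_1(x_k)\le\frac{\mu}{L_{\hat F}},\\ \hat f_1(x_k)-\frac{\mu}{2L_{\hat F}},&\text{otherwise}.\end{cases}$$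
   Context: Let $F:\mathbb R^n\to\mathbb R^m$ be smooth, $\hat F=\frac1{\sqrt m}F$ with Jacobian $\hat F'(x)$ and transpose $\hat F'(x)^*$; Euclidean norms, $\|\cdot\|_F$ Frobenius norm. $\hat f_1(x)=\|\hat F(x)\|$, $\hat f_2=\hat f_1^2$, $\phi(x,y)=\|\hat F(x)+\hat F'(x)(y-x)\|$, $\psi_{x,L,\tau}(y)=\frac\tau2+\frac{\phi(x,y)^2}{2\tau}+\frac L2\|y-x\|^2$, $T_{L,\tau}(x)=\arg\min_y\psi_{x,L,\tau}(y)$, $\mathcal T_L(x)=\arg\min_{\tau>0}\psi_{x,L,\tau}(T_{L,\tau}(x))$. $\mathcal F$ closed convex with nonempty interior, $\mathcal L(\hat f_1(x_0))\subseteq\mathcal F$ and the generated sequence stays in $\mathcal F$. Scheme 2 (input $x_0$; a rule choosing $\varepsilon_k\ge0$; $L\in(0,L_{\hat F}]$, $L_0=L$; a map $\mathcal X(x,L,\tau)$ approximating $T_{L,\tau}(x)$). For $k=0,1,\dots$: choose $\varepsilon_k$; find $\tau_k^*>0$ with $\psi_{x_k,L_k,\tau_k^*}(\mathcal X(x_k,L_k,\tau_k^* ))-\psi_{x_k,L_k,\mathcal T_{L_k}(x_k)}(T_{L_k,\mathcal T_{L_k}(x_k)}(x_k))\le\varepsilon_k$ and $\hat f_1(x_k)\ge\psi_{x_k,L_k,\tau_k^*}(\mathcal X(x_k,L_k,\tau_k^* ))$; set $x_{k+1}=\mathcal X(x_k,L_k,\tau_k^* )$; if $\hat f_1(x_{k+1})>\psi_{x_k,L_k,\tau_k^*}(x_{k+1})$,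 set $L_k:=\min\{2L_k,2L_{\hat F}\}$ and redo the search for $\tau_k^*$; otherwise $L_{k+1}=\max\{L_k/2,L\}$. *)

theory Defs
  imports "HOL-Analysis.Analysis"
begin

text \<open>F : R^n -> R^m is given by F, its Jacobian (an m x n matrix) by J.\<close>

definition Fhat :: "(real^'n \<Rightarrow> real^'m) \<Rightarrow> real^'n \<Rightarrow> real^'m" where
  "Fhat F x = (1 / sqrt (real CARD('m))) *\<^sub>R F x"

definition Jhat :: "(real^'n \<Rightarrow> real^'n^'m) \<Rightarrow> real^'n \<Rightarrow> real^'n^'m" where
  "Jhat J x = (1 / sqrt (real CARD('m))) *\<^sub>R J x"

definition f1 :: "(real^'n \<Rightarrow> real^'m) \<Rightarrow> real^'n \<Rightarrow> real" where
  "f1 F x = norm (Fhat F x)"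

definition f2 :: "(real^'n \<Rightarrow> real^'m) \<Rightarrow> real^'n \<Rightarrow> real" where
  "f2 F x = (f1 F x)^2"

definition frob_norm :: "real^'n^'m \<Rightarrow> real" where
  "frob_norm A = sqrt (\<Sum>i\<in>UNIV. \<Sum>j\<in>UNIV. (A $ i $ j)^2)"

text \<open>Smallest singular value of a linear map A : R^m -> R^n (used for A = Fhat'(x)^*):
  the minimum of |A v| over unit vectors v.\<close>
definition sigma_min :: "real^'m^'n \<Rightarrow> real" where
  "sigma_min A = Inf {norm (A *v v) | v. norm v = 1}"

definition phi :: "(real^'n \<Rightarrow> real^'m) \<Rightarrow> (real^'n \<Rightarrow> real^'n^'m) \<Rightarrow> real^'n \<Rightarrow> real^'n \<Rightarrow> real" where
  "phi F J x y = norm (Fhat F x + Jhat J x *v (y - x))"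

definition psi :: "(real^'n \<Rightarrow> real^'m) \<Rightarrow> (real^'n \<Rightarrow> real^'n^'m) \<Rightarrow> real^'n \<Rightarrow> real \<Rightarrow> real \<Rightarrow> real^'n \<Rightarrow> real" where
  "psi F J x L \<tau> y = \<tau> / 2 + (phi F J x y)^2 / (2 * \<tau>) + L / 2 * (norm (y - x))^2"

definition Tmap :: "(real^'n \<Rightarrow> real^'m) \<Rightarrow> (real^'n \<Rightarrow> real^'n^'m) \<Rightarrow> real \<Rightarrow> real \<Rightarrow> real^'n \<Rightarrow> real^'n" where
  "Tmap F J L \<tau> x = (ARG_MIN (psi F J x L \<tau>) y. True)"

text \<open>The optimal value psi_{x,L,T_L(x)}(T_{L,T_L(x)}(x)) = min over tau > 0 of
  psi_{x,L,tau}(T_{L,tau}(x)); written as an infimum (it need not be attained when the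
  linearized residual can vanish).\<close>
definition opt_val :: "(real^'n \<Rightarrow> real^'m) \<Rightarrow> (real^'n \<Rightarrow> real^'n^'m) \<Rightarrow> real \<Rightarrow> real^'n \<Rightarrow> real" where
  "opt_val F J L x = (INF \<tau>\<in>{0<..}. psi F J x L \<tau> (Tmap F J L \<tau> x))"

definition tau_ok :: "(real^'n \<Rightarrow> real^'m) \<Rightarrow> (real^'n \<Rightarrow> real^'n^'m)
    \<Rightarrow> (real^'n \<Rightarrow> real \<Rightarrow> real \<Rightarrow> real^'n) \<Rightarrow> real^'n \<Rightarrow> real \<Rightarrow> real \<Rightarrow> real \<Rightarrow> bool" where
  "tau_ok F J X x Lk \<epsilon> \<tau> \<longleftrightarrow> \<tau> > 0
     \<and> psi F J x Lk \<tau> (X x Lk \<tau>) - opt_val F J Lk x \<le> \<epsilon>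
     \<and> f1 F x \<ge> psi F J x Lk \<tau> (X x Lk \<tau>)"

text \<open>A run of Scheme 2.  Lstart k is the value of L_k at the beginning of iteration k,
  j k the number of doublings performed in iteration k, Lacc k the accepted value of L_k,
  \<tau> k the accepted tau_k^*, \<epsilon> k the chosen epsilon_k.\<close>
definition scheme2 ::
  "(real^'n \<Rightarrow> real^'m) \<Rightarrow> (real^'n \<Rightarrow> real^'n^'m) \<Rightarrow> (real^'n \<Rightarrow> real \<Rightarrow> real \<Rightarrow> real^'n)
   \<Rightarrow> real \<Rightarrow> real \<Rightarrow> (nat \<Rightarrow> real^'n) \<Rightarrow> (nat \<Rightarrow> real) \<Rightarrow> (nat \<Rightarrow> real) \<Rightarrow> (nat \<Rightarrow> nat)
   \<Rightarrow> (nat \<Rightarrow> real) \<Rightarrow> (nat \<Rightarrow> real) \<Rightarrow> bool" where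
  "scheme2 F J X L LF x \<epsilon> Lstart j Lacc \<tau> \<longleftrightarrow>
     0 < L \<and> L \<le> LF \<and>
     Lstart 0 = L \<and>
     (\<forall>k. \<epsilon> k \<ge> 0) \<and>
     (\<forall>k. Lacc k = min (2 ^ j k * Lstart k) (2 * LF)) \<and>
     (\<forall>k. Lstart (Suc k) = max (Lacc k / 2) L) \<and>
     (\<forall>k. \<forall>i < j k. \<exists>\<tau>'. tau_ok F J X (x k) (min (2 ^ i * Lstart k) (2 * LF)) (\<epsilon> k) \<tau>'
            \<and> f1 F (X (x k) (min (2 ^ i * Lstart k) (2 * LF)) \<tau>')
                > psi F J (x k) (min (2 ^ i * Lstart k) (2 * LF)) \<tau>'
                      (X (x k) (min (2 ^ i * Lstart k) (2 * LF)) \<tau>')) \<and>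
     (\<forall>k. tau_ok F J X (x k) (Lacc k) (\<epsilon> k) (\<tau> k)) \<and>
     (\<forall>k. x (Suc k) = X (x k) (Lacc k) (\<tau> k)) \<and>
     (\<forall>k. f1 F (x (Suc k)) \<le> psi F J (x k) (Lacc k) (\<tau> k) (x (Suc k)))"

end

theory Submission
  imports Defs
begin

lemma sigma_bound:
  fixes A :: "real^'n^'m"
  assumes "sigma_min (transpose A) \<ge> s"
  shows "norm (transpose A *v w) \<ge> s * norm w"
proof (cases "w = 0")
  case True
  then show ?thesis by simp
next
  case False
  let ?S = "{norm (transpose A *v v) | v. norm v = 1}"
  let ?v = "(1 / norm w) *\<^sub>R w"
  have nv: "norm ?v = 1" using False by simp
  have "bdd_below ?S" by (rule bdd_belowI[of _ 0]) auto
  then have "Inf ?S \<le> norm (transpose A *v ?v)" using nv by (intro cInf_lower) auto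
  then have "s \<le> norm (transpose A *v ?v)" using assms unfolding sigma_min_def by simp
  also have "transpose A *v ?v = (1 / norm w) *\<^sub>R (transpose A *v w)"
    by (simp add: matrix_vector_mult_scaleR)
  finally have "s \<le> norm (transpose A *v w) / norm w" by simp
  then show ?thesis using False by (simp add: field_simps)
qed

lemma gn_dir:
  fixes A :: "real^'n^'m" and b :: "real^'m"
  assumes "sigma_min (transpose A) \<ge> sqrt \<mu>" "\<mu> > 0"
  shows "\<exists>d. A *v d = - b \<and> norm d \<le> norm b / sqrt \<mu>"
proof -
  have lb: "norm (transpose A *v w) \<ge> sqrt \<mu> * norm w" for w
    using sigma_bound[OF assms(1)] .
  have dot: "(A *v d) \<bullet> w = d \<bullet> (transpose A *v w)" for d w
    by (metis dot_lmul_matrix inner_commute transpose_transpose vector_transpose_matrix)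
  define g where "g w = A *v (transpose A *v w)" for w
  have lin: "linear g"
  proof -
    have "g = (*v) A \<circ> (*v) (transpose A)" unfolding g_def by (rule ext) simp
    then show ?thesis
      using linear_compose[OF matrix_vector_mul_linear matrix_vector_mul_linear] by metis
  qed
  have gw: "w \<bullet> g w = (norm (transpose A *v w))^2" for w
    unfolding g_def by (metis dot inner_commute power2_norm_eq_inner)
  have "inj g"
  proof (rule linear_injective_0[OF lin, THEN iffD2], intro allI impI)
    fix w assume "g w = 0"
    then have "norm (transpose A *v w) = 0" using gw[of w] by simp
    then have "sqrt \<mu> * norm w \<le> 0" using lb[of w] by simp
    then show "w = 0" using assms(2) by (simp add: mult_le_0_iff)
  qed
  then have "surj g" using linear_inj_imp_surj lin by blast
  then obtain w where w: "g w = - b" by (metis surjD)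
  define d where "d = transpose A *v w"
  have Ad: "A *v d = - b" using w unfolding g_def d_def .
  have "(norm d)^2 = - (w \<bullet> b)" using gw[of w] w unfolding d_def by simp
  also have "\<dots> \<le> norm w * norm b" by (metis Cauchy_Schwarz_ineq2 abs_le_D2 inner_minus_left)
  finally have d2: "(norm d)^2 \<le> norm w * norm b" .
  have "sqrt \<mu> * norm w \<le> norm d" using lb[of w] unfolding d_def .
  then have "norm w \<le> norm d / sqrt \<mu>" using assms(2) by (simp add: field_simps)
  then have "(norm d)^2 \<le> norm d / sqrt \<mu> * norm b" using d2
    by (meson mult_right_mono norm_ge_zero order_trans)
  then have "norm d * norm d \<le> (norm b / sqrt \<mu>) * norm d" by (simp add: power2_eq_square mult.commute)
  then have "norm d \<le> norm b / sqrt \<mu>"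
  proof (cases "norm d = 0")
    case True then show ?thesis using assms(2) by simp
  next
    case False then show ?thesis using mult_right_le_imp_le[OF \<open>norm d * norm d \<le> (norm b / sqrt \<mu>) * norm d\<close>] by simp
  qed
  then show ?thesis using Ad by blast
qed

lemma psi_nonneg: "\<tau> > 0 \<Longrightarrow> L \<ge> 0 \<Longrightarrow> psi F J x L \<tau> y \<ge> 0"
  unfolding psi_def by (intro add_nonneg_nonneg) auto

lemma psi_min_exists:
  assumes L: "L > 0" and t: "\<tau> > 0"
  shows "\<exists>y0. \<forall>y. psi F J x L \<tau> y0 \<le> psi F J x L \<tau> y"
proof -
  let ?p = "psi F J x L \<tau>"
  define R where "R = 1 + (phi F J x x)^2 / (\<tau> * L)"
  have R1: "R \<ge> 1" unfolding R_def using L t by simp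
  have cont: "continuous_on UNIV ?p"
    unfolding psi_def phi_def
    by (intro continuous_intros matrix_vector_mult_linear_continuous_on[THEN continuous_on_compose2]) (use t in auto)
  obtain y0 where y0: "y0 \<in> cball x R" and min: "\<forall>y\<in>cball x R. ?p y0 \<le> ?p y"
  proof -
    have ne: "cball x R \<noteq> {}" using R1 by simp
    have c2: "continuous_on (cball x R) ?p" using cont continuous_on_subset by blast
    show ?thesis using continuous_attains_inf[OF compact_cball ne c2] that by blast
  qed
  have "?p y0 \<le> ?p x" using min R1 by simp
  also have "?p x = \<tau>/2 + (phi F J x x)^2 / (2*\<tau>)" unfolding psi_def by simp
  finally have px: "?p y0 \<le> \<tau>/2 + (phi F J x x)^2 / (2*\<tau>)" .
  have "?p y0 \<le> ?p y" for y
  proof (cases "y \<in> cball x R")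
    case True then show ?thesis using min by blast
  next
    case False
    then have "norm (y - x) > R" by (simp add: dist_norm norm_minus_commute)
    then have "R * 1 \<le> norm (y - x) * norm (y - x)" using R1
      by (intro mult_mono) auto
    then have "(norm (y - x))^2 \<ge> R" by (simp add: power2_eq_square)
    then have "L/2 * (norm (y - x))^2 \<ge> L/2 * R" using L by simp
    moreover have "L/2 * R \<ge> (phi F J x x)^2 / (2*\<tau>)"
      unfolding R_def using L t by (simp add: field_simps)
    ultimately have "?p y \<ge> \<tau>/2 + (phi F J x x)^2 / (2*\<tau>)"
      proof -
      have "(phi F J x y)^2 / (2*\<tau>) \<ge> 0" using t by simp
      then show ?thesis using \<open>L/2 * (norm (y - x))^2 \<ge> L/2 * R\<close> \<open>L/2 * R \<ge> (phi F J x x)^2 / (2*\<tau>)\<close>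
        unfolding psi_def by linarith
    qed
    then show ?thesis using px by simp
  qed
  then show ?thesis by blast
qed

lemma Tmap_min:
  assumes L: "L > 0" and t: "\<tau> > 0"
  shows "psi F J x L \<tau> (Tmap F J L \<tau> x) \<le> psi F J x L \<tau> y"
proof -
  obtain y0 where y0: "\<forall>y. psi F J x L \<tau> y0 \<le> psi F J x L \<tau> y"
    using psi_min_exists[OF L t] by blast
  have "is_arg_min (psi F J x L \<tau>) (\<lambda>y. True) y0"
    unfolding is_arg_min_def using y0 by (simp add: not_less)
  then have "is_arg_min (psi F J x L \<tau>) (\<lambda>y. True) (Tmap F J L \<tau> x)"
    unfolding Tmap_def arg_min_def by (rule someI)
  then show ?thesis unfolding is_arg_min_def by (simp add: not_less)
qed

lemma opt_val_le:
  assumes L: "L > 0"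
  shows "opt_val F J L x \<le> phi F J x y + L/2 * (norm (y - x))^2"
proof -
  let ?S = "(\<lambda>\<tau>. psi F J x L \<tau> (Tmap F J L \<tau> x)) ` {0<..}"
  let ?a = "phi F J x y" and ?c = "L/2 * (norm (y - x))^2"
  have bdd: "bdd_below ?S" using L by (intro bdd_belowI[of _ 0]) (auto intro!: psi_nonneg)
  have key: "opt_val F J L x \<le> \<tau>/2 + ?a^2/(2*\<tau>) + ?c" if t: "\<tau> > 0" for \<tau>
  proof -
    have "opt_val F J L x \<le> psi F J x L \<tau> (Tmap F J L \<tau> x)"
      unfolding opt_val_def using t bdd by (intro cInf_lower) auto
    also have "\<dots> \<le> psi F J x L \<tau> y" by (rule Tmap_min[OF L t])
    finally show ?thesis unfolding psi_def .
  qed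
  show ?thesis
  proof (cases "?a > 0")
    case True
    from key[OF True] show ?thesis using True by (simp add: power2_eq_square)
  next
    case False
    then have a0: "?a = 0" unfolding phi_def by simp
    have "opt_val F J L x \<le> ?c + e" if "e > 0" for e
      using key[of "2*e"] that a0 by simp
    then have "opt_val F J L x \<le> ?c" by (rule field_le_epsilon)
    then show ?thesis using a0 by simp
  qed
qed

lemma arith_gen:
  fixes f v e \<mu> Lk M :: real
  assumes f: "f \<ge> 0" and mu: "\<mu> > 0" and M: "M > 0" and Lk: "Lk \<le> 2 * M" "Lk > 0"
    and H: "\<forall>t\<in>{0..1}. v \<le> e + (1 - t) * f + Lk / 2 * t^2 * (f^2 / \<mu>)"
  shows "if f \<le> \<mu> / (2 * M) then v \<le> e + M / \<mu> * f^2 \<and> M / \<mu> * f^2 \<le> f / 2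
         else v \<le> e + (f - \<mu> / (4 * M))"
proof (cases "f \<le> \<mu> / (2 * M)")
  case True
  have "v \<le> e + Lk / 2 * (f^2 / \<mu>)" using H[rule_format, of 1] by simp
  also have "Lk / 2 * (f^2 / \<mu>) \<le> M * (f^2 / \<mu>)" using Lk mu
    by (intro mult_right_mono) auto
  finally have 1: "v \<le> e + M / \<mu> * f^2" by simp
  have "M * f \<le> \<mu> / 2" using True M by (simp add: field_simps)
  then have "M * f * f \<le> \<mu> / 2 * f" using f by (rule mult_right_mono)
  then have "M / \<mu> * f^2 \<le> f / 2" using mu by (simp add: field_simps power2_eq_square)
  then show ?thesis using 1 True by simp
next
  case False
  then have "\<mu> / (2 * M) < f" by simp
  then have "\<mu> < f * (2 * M)" using M by (simp add: divide_less_eq)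
  then have fp2: "2 * M * f > \<mu>" by (simp add: mult.commute)
  have fp1: "f > 0" using fp2 mu f by (cases "f = 0") auto
  note fp = fp1 fp2
  define t where "t = \<mu> / (2 * M * f)"
  have t01: "t \<in> {0..1}" unfolding t_def using fp mu by auto
  have "v \<le> e + (1 - t) * f + Lk / 2 * t^2 * (f^2 / \<mu>)" using H t01 by blast
  also have "(1 - t) * f = f - \<mu> / (2 * M)" unfolding t_def using fp M by (simp add: field_simps)
  also have "Lk / 2 * t^2 * (f^2 / \<mu>) = Lk * \<mu> / (8 * M^2)"
    unfolding t_def using fp M mu by (simp add: field_simps power2_eq_square)
  also have "Lk * \<mu> / (8 * M^2) \<le> 2 * M * \<mu> / (8 * M^2)" using Lk mu M
    by (intro divide_right_mono mult_right_mono) auto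
  also have "2 * M * \<mu> / (8 * M^2) = \<mu> / (4 * M)" using M by (simp add: field_simps power2_eq_square)
  finally have "v \<le> e + (f - \<mu> / (4 * M))" by simp
  then show ?thesis using False by simp
qed

theorem theorem9:
  fixes F :: "real^'n \<Rightarrow> real^'m" and J :: "real^'n \<Rightarrow> real^'n^'m"
    and X :: "real^'n \<Rightarrow> real \<Rightarrow> real \<Rightarrow> real^'n"
    and Fset :: "(real^'n) set"
    and L LF \<mu> :: real
    and x :: "nat \<Rightarrow> real^'n" and \<epsilon> Lstart Lacc \<tau> :: "nat \<Rightarrow> real" and j :: "nat \<Rightarrow> nat"
  assumes deriv: "\<forall>z. (F has_derivative (\<lambda>h. J z *v h)) (at z)"
    and Fset: "closed Fset" "convex Fset" "interior Fset \<noteq> {}"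
    and level: "{z. f1 F z \<le> f1 F (x 0)} \<subseteq> Fset"
    and stays: "\<forall>k. x k \<in> Fset"
    and lip: "\<forall>y\<in>Fset. \<forall>z\<in>Fset. frob_norm (Jhat J y - Jhat J z) \<le> LF * norm (y - z)"
    and mu: "\<mu> > 0" "\<forall>z\<in>Fset. sigma_min (transpose (Jhat J z)) \<ge> sqrt \<mu>"
    and run: "scheme2 F J X L LF x \<epsilon> Lstart j Lacc \<tau>"
  shows "(\<forall>k. if f1 F (x k) \<le> \<mu> / (2 * LF)
              then f1 F (x (Suc k)) \<le> \<epsilon> k + LF / \<mu> * f2 F (x k)
                   \<and> LF / \<mu> * f2 F (x k) \<le> f1 F (x k) / 2
              else f1 F (x (Suc k)) \<le> \<epsilon> k + (f1 F (x k) - \<mu> / (4 * LF)))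
       \<and> ((\<forall>k. Lacc k = LF) \<longrightarrow>
          (\<forall>k. if f1 F (x k) \<le> \<mu> / LF
              then f1 F (x (Suc k)) \<le> \<epsilon> k + LF / (2 * \<mu>) * f2 F (x k)
                   \<and> LF / (2 * \<mu>) * f2 F (x k) \<le> f1 F (x k) / 2
              else f1 F (x (Suc k)) \<le> \<epsilon> k + (f1 F (x k) - \<mu> / (2 * LF))))"
proof -
  from run have L0: "0 < L" "L \<le> LF" and LS0: "Lstart 0 = L"
    and eps: "\<forall>k. \<epsilon> k \<ge> 0"
    and Lacc: "\<forall>k. Lacc k = min (2 ^ j k * Lstart k) (2 * LF)"
    and LS: "\<forall>k. Lstart (Suc k) = max (Lacc k / 2) L"
    and tok: "\<forall>k. tau_ok F J X (x k) (Lacc k) (\<epsilon> k) (\<tau> k)"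
    and xs: "\<forall>k. x (Suc k) = X (x k) (Lacc k) (\<tau> k)"
    and acc: "\<forall>k. f1 F (x (Suc k)) \<le> psi F J (x k) (Lacc k) (\<tau> k) (x (Suc k))"
    unfolding scheme2_def by blast+
  have LF: "LF > 0" using L0 by simp
  have LSpos: "Lstart k \<ge> L" for k by (cases k) (auto simp: LS0 LS)
  have Lpos: "Lacc k > 0" for k
  proof -
    have "2 ^ j k * Lstart k > 0" using LSpos[of k] L0 by (simp add: order_less_le_trans)
    then show ?thesis using Lacc LF by simp
  qed
  have Lle: "Lacc k \<le> 2 * LF" for k using Lacc by simp
  have H: "\<forall>t\<in>{0..1}. f1 F (x (Suc k)) \<le> \<epsilon> k + (1 - t) * f1 F (x k)
             + Lacc k / 2 * t^2 * ((f1 F (x k))^2 / \<mu>)" for k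
  proof
    fix t :: real assume t: "t \<in> {0..1}"
    let ?xk = "x k"
    have "f1 F (x (Suc k)) \<le> psi F J ?xk (Lacc k) (\<tau> k) (x (Suc k))" using acc by blast
    also have "\<dots> \<le> opt_val F J (Lacc k) ?xk + \<epsilon> k"
      using tok[rule_format, of k] xs[rule_format, of k] unfolding tau_ok_def by simp
    finally have a: "f1 F (x (Suc k)) \<le> opt_val F J (Lacc k) ?xk + \<epsilon> k" .
    obtain d where d: "Jhat J ?xk *v d = - Fhat F ?xk" "norm d \<le> norm (Fhat F ?xk) / sqrt \<mu>"
      using gn_dir[OF mu(2)[rule_format, OF stays[rule_format, of k]] mu(1)] by blast
    have nd: "norm d \<le> f1 F ?xk / sqrt \<mu>" using d(2) unfolding f1_def .
    have b: "opt_val F J (Lacc k) ?xk \<le> phi F J ?xk (?xk + t *\<^sub>R d) + Lacc k / 2 * (norm (?xk + t *\<^sub>R d - ?xk))^2"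
      by (rule opt_val_le[OF Lpos])
    have "Fhat F ?xk + Jhat J ?xk *v (?xk + t *\<^sub>R d - ?xk) = (1 - t) *\<^sub>R Fhat F ?xk"
      using d(1) by (simp add: matrix_vector_mult_scaleR algebra_simps)
    then have "phi F J ?xk (?xk + t *\<^sub>R d) = (1 - t) * f1 F ?xk"
      unfolding phi_def f1_def using t by simp
    moreover have "(norm (?xk + t *\<^sub>R d - ?xk))^2 \<le> t^2 * ((f1 F ?xk)^2 / \<mu>)"
    proof -
      have "(norm (?xk + t *\<^sub>R d - ?xk))^2 = t^2 * (norm d)^2" using t by (simp add: power_mult_distrib)
      also have "(norm d)^2 \<le> (f1 F ?xk / sqrt \<mu>)^2" using nd by (intro power_mono) auto
      also have "\<dots> = (f1 F ?xk)^2 / \<mu>" using mu(1) by (simp add: power_divide)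
      finally show ?thesis by (simp add: mult_left_mono)
    qed
    ultimately have "opt_val F J (Lacc k) ?xk \<le> (1 - t) * f1 F ?xk + Lacc k / 2 * (t^2 * ((f1 F ?xk)^2 / \<mu>))"
      using b Lpos[of k] by (smt (verit) mult_left_mono half_gt_zero_iff)
    then show "f1 F (x (Suc k)) \<le> \<epsilon> k + (1 - t) * f1 F (x k) + Lacc k / 2 * t^2 * ((f1 F (x k))^2 / \<mu>)"
      using a by (simp add: mult.assoc)
  qed
  have f0: "f1 F z \<ge> 0" for z unfolding f1_def by simp
  have P1: "if f1 F (x k) \<le> \<mu> / (2 * LF)
              then f1 F (x (Suc k)) \<le> \<epsilon> k + LF / \<mu> * f2 F (x k)
                   \<and> LF / \<mu> * f2 F (x k) \<le> f1 F (x k) / 2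
              else f1 F (x (Suc k)) \<le> \<epsilon> k + (f1 F (x k) - \<mu> / (4 * LF))" for k
    using arith_gen[OF f0 mu(1) LF Lle Lpos H] unfolding f2_def .
  have P2: "if f1 F (x k) \<le> \<mu> / LF
              then f1 F (x (Suc k)) \<le> \<epsilon> k + LF / (2 * \<mu>) * f2 F (x k)
                   \<and> LF / (2 * \<mu>) * f2 F (x k) \<le> f1 F (x k) / 2
              else f1 F (x (Suc k)) \<le> \<epsilon> k + (f1 F (x k) - \<mu> / (2 * LF))"
    if "\<forall>k. Lacc k = LF" for k
  proof -
    have "LF / 2 > 0" using LF by simp
    have "Lacc k \<le> 2 * (LF / 2)" using that by simp
    note R = arith_gen[OF f0 mu(1) \<open>LF / 2 > 0\<close> this Lpos H]
    have e0: "2 * (LF / 2) = LF" and e1: "LF / 2 / \<mu> = LF / (2 * \<mu>)" and e2: "4 * (LF / 2) = 2 * LF"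
      by simp_all
    show ?thesis using R unfolding f2_def e0 e1 e2 .
  qed
  show ?thesis using P1 P2 by blast
qed

end
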